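(* Let $N\ge 5$ be odd. Let $G_{N,2}$ be the graph with vertex set $\mathbb Z_N$ in which two distinct vertices $x,y$ are adjacent iff $y-x\not\equiv\pm2\pmod N$. Put $\Delta=\sqrt{N(N-4)}$, $\rho=\frac{N-2+\Delta}{2}$. Then $G_{N,2}$ is $(N-3)$-regular with $\frac{N(N-3)}{2}$ edges, and for $u,v\in\mathbb Z_N$, with $q\equiv v-u\pmod N$, $s\equiv 2^{-1}\pmod N$, $\delta_2(q)=\min\{sq\bmod N,\;N-(sq\bmod N)\}$, the expected hitting time of $v$ by the simple random walk on $G_{N,2}$ started at $u$ satisfies $H^{(2)}(u,v)=\frac{N(N-3)}{2}R^{(2)}(u,v)$, where $R^{(2)}$ is effective resistance in $G_{N,2}$, and explicitly \[ H^{(2)}(u,v)=\frac{N(N-3)}{\Delta(\rho^N+1)}\left\{\rho^N-1+(-1)^{\delta_2(q)}\left(\rho^{\delta_2(q)}-\rho^{N-\delta_2(q)}\right)\right\}. \]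
   Context: The simple random walk moves to a uniformly random neighbour at each step; effective resistance uses unit conductance on every edge. *)

theory Defs
  imports Complex_Main
begin

text \<open>Generic finite simple graph given by a vertex set V and a symmetric irreflexive
  adjacency relation adj.\<close>

definition deg :: "'a set \<Rightarrow> ('a \<Rightarrow> 'a \<Rightarrow> bool) \<Rightarrow> 'a \<Rightarrow> nat" where
  "deg V adj x = card {y \<in> V. adj x y}"

definition edges :: "'a set \<Rightarrow> ('a \<Rightarrow> 'a \<Rightarrow> bool) \<Rightarrow> 'a set set" where
  "edges V adj = {{x, y} | x y. x \<in> V \<and> y \<in> V \<and> adj x y}"

text \<open>Simple random walk started at u, killed on hitting v:
  surv V adj u v n x = P(X_n = x and X_i \<noteq> v for all i \<le> n).\<close>
fun surv :: "'a set \<Rightarrow> ('a \<Rightarrow> 'a \<Rightarrow> bool) \<Rightarrow> 'a \<Rightarrow> 'a \<Rightarrow> nat \<Rightarrow> 'a \<Rightarrow> real" where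
  "surv V adj u v 0 y = (if y = u \<and> u \<noteq> v then 1 else 0)"
| "surv V adj u v (Suc n) y =
     (if y = v then 0
      else (\<Sum>x\<in>V. surv V adj u v n x * (if adj x y then 1 / real (deg V adj x) else 0)))"

text \<open>P(T_v > n) where T_v = min {n \<ge> 0. X_n = v} is the hitting time of v.\<close>
definition tail_prob :: "'a set \<Rightarrow> ('a \<Rightarrow> 'a \<Rightarrow> bool) \<Rightarrow> 'a \<Rightarrow> 'a \<Rightarrow> nat \<Rightarrow> real" where
  "tail_prob V adj u v n = (\<Sum>x\<in>V. surv V adj u v n x)"

text \<open>Expected hitting time E_u[T_v] = \<Sum>_{n\<ge>0} P_u(T_v > n).\<close>
definition hitting_time :: "'a set \<Rightarrow> ('a \<Rightarrow> 'a \<Rightarrow> bool) \<Rightarrow> 'a \<Rightarrow> 'a \<Rightarrow> real" where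
  "hitting_time V adj u v = (\<Sum>n. tail_prob V adj u v n)"

definition energy :: "'a set \<Rightarrow> ('a \<Rightarrow> 'a \<Rightarrow> bool) \<Rightarrow> ('a \<Rightarrow> real) \<Rightarrow> real" where
  "energy V adj \<phi> = (\<Sum>x\<in>V. \<Sum>y\<in>V. if adj x y then (\<phi> x - \<phi> y)\<^sup>2 else 0) / 2"

text \<open>Effective resistance = 1 / effective conductance (Dirichlet principle).\<close>
definition eff_res :: "'a set \<Rightarrow> ('a \<Rightarrow> 'a \<Rightarrow> bool) \<Rightarrow> 'a \<Rightarrow> 'a \<Rightarrow> real" where
  "eff_res V adj u v =
     (if u = v then 0
      else 1 / Inf {energy V adj \<phi> | \<phi>. \<phi> u = 1 \<and> \<phi> v = 0})"

definition GN2_adj :: "nat \<Rightarrow> nat \<Rightarrow> nat \<Rightarrow> bool" where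
  "GN2_adj N x y \<longleftrightarrow> x \<noteq> y \<and> (int y - int x) mod int N \<noteq> 2 \<and> (int x - int y) mod int N \<noteq> 2"

end

theory Submission
  imports Defs
begin

definition lap :: "'a set \<Rightarrow> ('a \<Rightarrow> 'a \<Rightarrow> bool) \<Rightarrow> ('a \<Rightarrow> real) \<Rightarrow> 'a \<Rightarrow> real" where
  "lap V a f x = (\<Sum>y\<in>V. if a x y then f x - f y else 0)"

lemma lap_sum_zero:
  assumes "finite V" and sym: "\<And>x y. a x y = a y x"
  shows "(\<Sum>x\<in>V. lap V a f x) = 0"
proof -
  have "(\<Sum>x\<in>V. lap V a f x) = (\<Sum>x\<in>V. \<Sum>y\<in>V. if a x y then f x else 0) - (\<Sum>x\<in>V. \<Sum>y\<in>V. if a x y then f y else 0)"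
    unfolding lap_def by (simp add: sum_subtractf[symmetric] if_distrib cong: if_cong)
  also have "(\<Sum>x\<in>V. \<Sum>y\<in>V. if a x y then f y else 0) = (\<Sum>y\<in>V. \<Sum>x\<in>V. if a x y then f y else 0)"
    by (rule sum.swap)
  also have "\<dots> = (\<Sum>x\<in>V. \<Sum>y\<in>V. if a x y then f x else 0)"
    using sym by (simp)
  finally show ?thesis by simp
qed

lemma bilin_lap:
  assumes "finite V" and sym: "\<And>x y. a x y = a y x"
  shows "(\<Sum>x\<in>V. \<Sum>y\<in>V. if a x y then (f x - f y) * (g x - g y) else 0) = 2 * (\<Sum>x\<in>V. g x * lap V a f x)"
proof -
  have "(\<Sum>x\<in>V. \<Sum>y\<in>V. if a x y then (f x - f y) * (g x - g y) else 0)
      = (\<Sum>x\<in>V. \<Sum>y\<in>V. if a x y then (f x - f y) * g x else 0) - (\<Sum>x\<in>V. \<Sum>y\<in>V. if a x y then (f x - f y) * g y else 0)"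
    by (simp add: sum_subtractf[symmetric]) (intro sum.cong refl, auto simp: right_diff_distrib)
  also have "(\<Sum>x\<in>V. \<Sum>y\<in>V. if a x y then (f x - f y) * g y else 0) = (\<Sum>y\<in>V. \<Sum>x\<in>V. if a x y then (f x - f y) * g y else 0)"
    by (rule sum.swap)
  also have "\<dots> = - (\<Sum>x\<in>V. \<Sum>y\<in>V. if a x y then (f x - f y) * g x else 0)"
    unfolding sum_negf[symmetric] using sym by (intro sum.cong refl) (auto simp: algebra_simps)
  also have "(\<Sum>x\<in>V. \<Sum>y\<in>V. if a x y then (f x - f y) * g x else 0) = (\<Sum>x\<in>V. g x * lap V a f x)"
    unfolding lap_def by (simp add: sum_distrib_left if_distrib mult.commute cong: if_cong)
  finally show ?thesis by simp
qed

lemma energy_lap: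
  assumes "finite V" and sym: "\<And>x y. a x y = a y x"
  shows "energy V a f = (\<Sum>x\<in>V. f x * lap V a f x)"
  using bilin_lap[where V=V and a=a and f=f and g=f, OF assms] unfolding energy_def power2_eq_square by simp

lemma energy_add:
  assumes "finite V" and sym: "\<And>x y. a x y = a y x"
  shows "energy V a (\<lambda>x. f x + g x) = energy V a f + energy V a g + 2 * (\<Sum>x\<in>V. g x * lap V a f x)"
proof -
  have "(\<Sum>x\<in>V. \<Sum>y\<in>V. if a x y then ((f x + g x) - (f y + g y))\<^sup>2 else 0)
     = (\<Sum>x\<in>V. \<Sum>y\<in>V. if a x y then (f x - f y)\<^sup>2 else 0) + (\<Sum>x\<in>V. \<Sum>y\<in>V. if a x y then (g x - g y)\<^sup>2 else 0)
       + 2 * (\<Sum>x\<in>V. \<Sum>y\<in>V. if a x y then (f x - f y) * (g x - g y) else 0)"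
  proof -
    have e: "\<And>x y. (if a x y then ((f x + g x) - (f y + g y))\<^sup>2 else 0) = (if a x y then (f x - f y)\<^sup>2 else 0) + (if a x y then (g x - g y)\<^sup>2 else 0) + 2 * (if a x y then (f x - f y) * (g x - g y) else 0)"
      by (simp add: power2_eq_square algebra_simps)
    show ?thesis unfolding e by (simp add: sum.distrib sum_distrib_left)
  qed
  then show ?thesis unfolding energy_def using bilin_lap[where V=V and a=a and f=f and g=g, OF assms] by simp
qed

lemma energy_nonneg: "energy V a f \<ge> 0"
  unfolding energy_def by (auto intro!: sum_nonneg divide_nonneg_pos)

lemma lap_lin:
  "lap V a (\<lambda>x. (f x - g x + c) / e) x = (lap V a f x - lap V a g x) / e"
proof -
  have "lap V a (\<lambda>x. (f x - g x + c) / e) x = (\<Sum>y\<in>V. ((if a x y then f x - f y else 0) - (if a x y then g x - g y else 0)) / e)"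
    unfolding lap_def by (rule sum.cong) (auto simp: diff_divide_distrib add_divide_distrib)
  then show ?thesis unfolding lap_def by (simp add: sum_subtractf sum_divide_distrib[symmetric])
qed

definition Dl :: "nat \<Rightarrow> real" where "Dl N = sqrt (real N * (real N - 4))"
definition rho :: "nat \<Rightarrow> real" where "rho N = (real N - 2 + Dl N) / 2"
definition Cc :: "nat \<Rightarrow> real" where "Cc N = real N * (real N - 3) / (Dl N * (rho N ^ N + 1))"
definition gg :: "nat \<Rightarrow> nat \<Rightarrow> real" where
  "gg N j = Cc N * (rho N ^ N - 1 + (-1) ^ j * (rho N ^ j - rho N ^ (N - j)))"

locale gn2 =
  fixes N :: nat and s :: int
  assumes oddN: "odd N" and N5: "N \<ge> 5" and s2: "(2 * s) mod int N = 1"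
begin

lemma Dl_sq: "Dl N ^ 2 = real N * (real N - 4)"
  unfolding Dl_def using N5 by simp

lemma Dl_pos: "Dl N > 0"
  unfolding Dl_def using N5 by simp

lemma rho_gt1: "rho N > 1"
  unfolding rho_def using Dl_pos N5 by simp

lemma rho_sq: "rho N ^ 2 = (real N - 2) * rho N - 1"
  unfolding rho_def using Dl_sq by (simp add: power2_eq_square field_simps)

lemma key: "real N * (rho N - 1) = Dl N * (rho N + 1)"
  unfolding rho_def using Dl_sq by (simp add: power2_eq_square field_simps)

lemma Cc_pos: "Cc N > 0"
proof -
  have "0 < rho N ^ N" using rho_gt1 by simp
  then show ?thesis unfolding Cc_def using N5 Dl_pos by (intro divide_pos_pos mult_pos_pos) auto
qed

lemma gg_0: "gg N 0 = 0" unfolding gg_def by simp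
lemma gg_N: "gg N N = 0" unfolding gg_def using oddN by simp

lemma gg_sym: assumes "j \<le> N" shows "gg N (N - j) = gg N j"
proof -
  have e: "(-1::real) ^ (N - j) = - ((-1) ^ j)"
  proof -
    have "(-1::real) ^ N = (-1) ^ (N - j) * (-1) ^ j" using assms by (simp add: power_add[symmetric])
    then have "(-1::real) ^ (N - j) * (-1) ^ j = -1" using oddN by simp
    then show ?thesis by (simp add: minus_one_power_iff split: if_splits)
  qed
  show ?thesis unfolding gg_def e using assms by (simp add: algebra_simps)
qed

lemma abs_aux: "(A::real) \<le> P \<Longrightarrow> B \<le> P \<Longrightarrow> 1 \<le> A \<Longrightarrow> 1 \<le> B \<Longrightarrow> \<bar>A - B\<bar> \<le> P - 1"
  by (simp add: abs_le_iff)
lemma abs_aux2: "(A::real) < P \<Longrightarrow> B < P \<Longrightarrow> 1 \<le> A \<Longrightarrow> 1 \<le> B \<Longrightarrow> \<bar>A - B\<bar> < P - 1"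
  by (simp add: abs_less_iff)

lemma abs_diff_bound: assumes "j \<le> N" shows "\<bar>rho N ^ j - rho N ^ (N - j)\<bar> \<le> rho N ^ N - 1"
proof -
  have a: "rho N ^ j \<le> rho N ^ N" "rho N ^ (N - j) \<le> rho N ^ N"
    using power_increasing[of j N "rho N"] power_increasing[of "N - j" N "rho N"] rho_gt1 assms by auto
  have b: "1 \<le> rho N ^ j" "1 \<le> rho N ^ (N - j)" using rho_gt1 one_le_power[of "rho N"] by auto
  show ?thesis using abs_aux[OF a b] .
qed

lemma abs_diff_bound_strict: assumes "0 < j" "j < N" shows "\<bar>rho N ^ j - rho N ^ (N - j)\<bar> < rho N ^ N - 1"
proof -
  have a: "rho N ^ j < rho N ^ N" "rho N ^ (N - j) < rho N ^ N"
    using power_strict_increasing[of j N "rho N"] power_strict_increasing[of "N - j" N "rho N"] rho_gt1 assms by auto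
  have b: "1 \<le> rho N ^ j" "1 \<le> rho N ^ (N - j)" using rho_gt1 one_le_power[of "rho N"] by auto
  show ?thesis using abs_aux2[OF a b] .
qed

lemma sign_ge: "(-1::real) ^ j * x \<ge> - \<bar>x\<bar>"
  by (cases "even j") auto

lemma gg_nonneg: assumes "j \<le> N" shows "gg N j \<ge> 0"
  unfolding gg_def using Cc_pos abs_diff_bound[OF assms] sign_ge[where j=j and x="rho N ^ j - rho N ^ (N - j)"]
  by (intro mult_nonneg_nonneg) auto

lemma gg_pos: assumes "0 < j" "j < N" shows "gg N j > 0"
  unfolding gg_def using Cc_pos abs_diff_bound_strict[OF assms] sign_ge[where j=j and x="rho N ^ j - rho N ^ (N - j)"]
  by (intro mult_pos_pos) auto

lemma geo: "(\<Sum>j<N. (- rho N) ^ j) = (1 + rho N ^ N) / (1 + rho N)"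
proof -
  have "(- rho N) \<noteq> 1" using rho_gt1 by auto
  then have "(\<Sum>j<N. (- rho N) ^ j) = (1 - (- rho N) ^ N) / (1 - (- rho N))"
    by (simp add: sum_gp_strict)
  then show ?thesis using oddN by simp
qed

lemma geo2: "(\<Sum>j<N. (-1) ^ j * rho N ^ (N - j)) = rho N * ((1 + rho N ^ N) / (1 + rho N))"
proof -
  have "(\<Sum>j<N. (-1) ^ j * rho N ^ (N - j)) = (\<Sum>j<N. (-1) ^ (N - Suc j) * rho N ^ (N - (N - Suc j)))"
    by (rule sum.nat_diff_reindex[symmetric])
  also have "\<dots> = (\<Sum>j<N. rho N * (- rho N) ^ j)"
  proof (rule sum.cong[OF refl])
    fix j assume "j \<in> {..<N}"
    then have j: "j < N" by simp
    have "(-1::real) ^ (N - Suc j) = (-1) ^ j"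
    proof -
      have "even (N - Suc j + j)" using j oddN by simp
      then have "even (N - Suc j) = even j" by simp
      then show ?thesis by (simp add: minus_one_power_iff)
    qed
    moreover have "N - (N - Suc j) = Suc j" using j by simp
    moreover have "(-1) ^ j * rho N ^ Suc j = rho N * (- rho N) ^ j"
      by (simp add: power_minus[of "rho N" j])
    ultimately show "(-1) ^ (N - Suc j) * rho N ^ (N - (N - Suc j)) = rho N * (- rho N) ^ j"
      by simp
  qed
  also have "\<dots> = rho N * (\<Sum>j<N. (- rho N) ^ j)" by (simp add: sum_distrib_left)
  finally show ?thesis using geo by simp
qed

lemma aux_frac: "(P::real) \<noteq> 0 \<Longrightarrow> Q \<noteq> 0 \<Longrightarrow> D \<noteq> 0 \<Longrightarrow> n * m / (D * P) * (r * P / Q) = m * (n * r) / (D * Q)"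
  by (simp add: field_simps)

definition SG where "SG = (\<Sum>j<N. gg N j)"

lemma SG_val: "SG = Cc N * real N * (rho N ^ N - 1) - (real N - 3)"
proof -
  have "SG = Cc N * (\<Sum>j<N. (rho N ^ N - 1) + (- rho N) ^ j - (-1) ^ j * rho N ^ (N - j))"
    unfolding SG_def gg_def sum_distrib_left[symmetric]
  proof (rule arg_cong[where f="\<lambda>t. Cc N * t"], rule sum.cong[OF refl])
    fix j
    show "rho N ^ N - 1 + (- 1) ^ j * (rho N ^ j - rho N ^ (N - j)) = rho N ^ N - 1 + (- rho N) ^ j - (- 1) ^ j * rho N ^ (N - j)"
      by (simp add: power_minus[of "rho N" j] right_diff_distrib)
  qed
  also have "\<dots> = Cc N * (real N * (rho N ^ N - 1) + (1 + rho N ^ N) / (1 + rho N) - rho N * ((1 + rho N ^ N) / (1 + rho N)))"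
    by (simp add: sum.distrib sum_subtractf geo geo2)
  also have "\<dots> = Cc N * real N * (rho N ^ N - 1) - Cc N * ((rho N - 1) * (1 + rho N ^ N) / (1 + rho N))"
    by (simp add: algebra_simps add_divide_distrib diff_divide_distrib)
  also have "Cc N * ((rho N - 1) * (1 + rho N ^ N) / (1 + rho N)) = real N - 3"
  proof -
    have p: "rho N ^ N + 1 > 0" "rho N + 1 > 0" using rho_gt1 by (auto simp: add_pos_pos)
    have "Cc N * ((rho N - 1) * (1 + rho N ^ N) / (1 + rho N)) = (real N - 3) * (real N * (rho N - 1)) / (Dl N * (rho N + 1))"
      unfolding Cc_def using p Dl_pos aux_frac[of "rho N ^ N + 1" "rho N + 1" "Dl N" "real N" "real N - 3" "rho N - 1"]
      by (simp add: add.commute)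
    also have "\<dots> = real N - 3" using key Dl_pos p by simp
    finally show ?thesis .
  qed
  finally show ?thesis .
qed

lemma gg_rec: assumes "1 \<le> j" "j < N"
  shows "(real N - 2) * gg N j + gg N (j + 1) + gg N (j - 1) = (real N - 3) + SG"
proof -
  obtain i where i: "j = Suc i" using assms by (cases j) auto
  have "i + 2 \<le> N" using assms i by simp
  then obtain m where m: "N = i + 2 + m" using le_Suc_ex by blast
  define r where "r = rho N"
  define e :: real where "e = (-1) ^ i"
  have r2: "r * r = (real N - 2) * r - 1" using rho_sq unfolding r_def by (simp add: power2_eq_square)
  have g1: "gg N j = Cc N * (r ^ N - 1 - e * (r * r ^ i - r * r ^ m))"
    unfolding gg_def r_def[symmetric] e_def i using m by (simp add: power_add)
  have g2: "gg N (j + 1) = Cc N * (r ^ N - 1 + e * (r * r * r ^ i - r ^ m))"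
    unfolding gg_def r_def[symmetric] e_def i using m by (simp add: power_add)
  have g3: "gg N (j - 1) = Cc N * (r ^ N - 1 + e * (r ^ i - r * r * r ^ m))"
    unfolding gg_def r_def[symmetric] e_def i using m by (simp add: power_add)
  have "(real N - 2) * gg N j + gg N (j + 1) + gg N (j - 1)
      = Cc N * (real N * (r ^ N - 1) + e * (r ^ i - r ^ m) * (r * r - (real N - 2) * r + 1))"
    unfolding g1 g2 g3 by (simp add: algebra_simps)
  also have "\<dots> = Cc N * real N * (r ^ N - 1)" using r2 by simp
  finally show ?thesis using SG_val unfolding r_def by simp
qed

end

definition nxt :: "nat \<Rightarrow> nat \<Rightarrow> nat" where "nxt N x = (if x + 2 < N then x + 2 else x + 2 - N)"
definition prv :: "nat \<Rightarrow> nat \<Rightarrow> nat" where "prv N x = (if 2 \<le> x then x - 2 else x + N - 2)"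
definition GG :: "nat \<Rightarrow> int \<Rightarrow> real" where "GG N k = gg N (nat (k mod int N))"
definition hh :: "nat \<Rightarrow> int \<Rightarrow> nat \<Rightarrow> nat \<Rightarrow> real" where "hh N s w x = GG N (s * (int x - int w))"

lemma mod_diff_small:
  assumes "x < N" "y < N"
  shows "(int y - int x) mod int N = (if x \<le> y then int y - int x else int y - int x + int N)"
proof (cases "x \<le> y")
  case True then show ?thesis using assms by (simp add: mod_pos_pos_trivial)
next
  case False
  have "(int y - int x) mod int N = (int y - int x + int N) mod int N" by simp
  also have "\<dots> = int y - int x + int N" using assms False by (intro mod_pos_pos_trivial) auto
  finally show ?thesis using False by simp
qed

context gn2 begin

lemma adj_iff: assumes "x < N" "y < N"
  shows "GN2_adj N x y \<longleftrightarrow> y \<noteq> x \<and> y \<noteq> nxt N x \<and> y \<noteq> prv N x"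
  unfolding GN2_adj_def mod_diff_small[OF assms] mod_diff_small[OF assms(2,1)] nxt_def prv_def
  using assms N5 by auto

lemma adj_sym: "GN2_adj N x y = GN2_adj N y x"
  unfolding GN2_adj_def by auto

lemma nxt_prv: assumes "x < N"
  shows "nxt N x < N" "prv N x < N" "nxt N x \<noteq> x" "prv N x \<noteq> x" "nxt N x \<noteq> prv N x"
  using assms N5 unfolding nxt_def prv_def by auto

lemma nbrs: assumes "x < N"
  shows "{y \<in> {0..<N}. GN2_adj N x y} = {0..<N} - {x, nxt N x, prv N x}"
  using adj_iff[OF assms] by auto

lemma deg_val: assumes "x < N" shows "deg {0..<N} (GN2_adj N) x = N - 3"
proof -
  have "card {x, nxt N x, prv N x} = 3" using nxt_prv[OF assms] by auto
  moreover have "{x, nxt N x, prv N x} \<subseteq> {0..<N}" using nxt_prv[OF assms] assms by auto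
  ultimately show ?thesis unfolding deg_def nbrs[OF assms] by (simp add: card_Diff_subset)
qed

lemma nbr_sum: fixes f :: "nat \<Rightarrow> real" assumes "x < N"
  shows "(\<Sum>y\<in>{0..<N}. if GN2_adj N x y then f y else 0) = (\<Sum>y\<in>{0..<N}. f y) - f x - f (nxt N x) - f (prv N x)"
proof -
  have sub: "{x, nxt N x, prv N x} \<subseteq> {0..<N}" using nxt_prv[OF assms] assms by auto
  have "(\<Sum>y\<in>{0..<N}. if GN2_adj N x y then f y else 0) = sum f {y \<in> {0..<N}. GN2_adj N x y}"
    by (rule sum.inter_filter[symmetric]) simp
  also have "\<dots> = sum f {0..<N} - sum f {x, nxt N x, prv N x}"
    unfolding nbrs[OF assms] using sub by (intro sum_diff) auto
  also have "sum f {x, nxt N x, prv N x} = f x + f (nxt N x) + f (prv N x)"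
    using nxt_prv[OF assms] by simp
  finally show ?thesis by simp
qed

lemma lap_val: assumes "x < N"
  shows "lap {0..<N} (GN2_adj N) f x = (real N - 3) * f x - ((\<Sum>y\<in>{0..<N}. f y) - f x - f (nxt N x) - f (prv N x))"
proof -
  have "lap {0..<N} (GN2_adj N) f x = (\<Sum>y\<in>{0..<N}. if GN2_adj N x y then f x else 0) - (\<Sum>y\<in>{0..<N}. if GN2_adj N x y then f y else 0)"
    unfolding lap_def by (simp add: sum_subtractf[symmetric]) (intro sum.cong refl, auto)
  also have "(\<Sum>y\<in>{0..<N}. if GN2_adj N x y then f x else 0) = real (deg {0..<N} (GN2_adj N) x) * f x"
    unfolding deg_def by (simp flip: sum.inter_filter)
  also have "real (deg {0..<N} (GN2_adj N) x) = real N - 3" using deg_val[OF assms] N5 by simp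
  finally show ?thesis using nbr_sum[OF assms] by simp
qed

lemma dvd_2s: "int N dvd (2 * s - 1)"
proof -
  have "2 * s = int N * (2 * s div int N) + 1" using s2 by (metis div_mult_mod_eq add.commute mult.commute)
  then show ?thesis by (metis add_diff_cancel_right' dvd_triv_left)
qed

lemma s_cancel: assumes "x < N" "w < N" "int N dvd s * (int x - int w)" shows "x = w"
proof -
  have "int N dvd 2 * (s * (int x - int w)) - (2 * s - 1) * (int x - int w)"
    using assms(3) dvd_2s by (intro dvd_diff) auto
  moreover have "2 * (s * (int x - int w)) - (2 * s - 1) * (int x - int w) = int x - int w"
    by (simp add: algebra_simps)
  ultimately have d: "int N dvd (int x - int w)" by simp
  show ?thesis
  proof (rule ccontr)
    assume "x \<noteq> w"
    then have "int x - int w \<noteq> 0" by simp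
    from dvd_imp_le_int[OF this d] have "int N \<le> \<bar>int x - int w\<bar>" by simp
    then show False using assms by auto
  qed
qed

lemma mod_lt: "nat (k mod int N) < N"
proof -
  have "0 \<le> k mod int N" "k mod int N < int N" using N5 by simp_all
  then show ?thesis by (subst nat_less_iff) auto
qed

lemma GG_cong: "k mod int N = k' mod int N \<Longrightarrow> GG N k = GG N k'"
  unfolding GG_def by simp

lemma GG_nonneg: "GG N k \<ge> 0"
proof -
  have "nat (k mod int N) \<le> N" using mod_lt by (simp add: less_imp_le)
  then show ?thesis unfolding GG_def by (rule gg_nonneg)
qed

lemma int_nat_mod: "int (nat (k mod int N)) = k mod int N"
  using N5 by simp

lemma GG_neg: "GG N (- k) = GG N k"
proof (cases "k mod int N = 0")
  case True
  then have "(- k) mod int N = 0" by (simp add: zmod_zminus1_eq_if)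
  then show ?thesis using True unfolding GG_def by simp
next
  case False
  then have e: "(- k) mod int N = int N - k mod int N" by (simp add: zmod_zminus1_eq_if)
  have "nat (int N - k mod int N) = N - nat (k mod int N)" using N5 int_nat_mod[of k] by linarith
  then show ?thesis unfolding GG_def e using gg_sym mod_lt[of k] by simp
qed

lemma GG_rec: assumes "k mod int N \<noteq> 0"
  shows "(real N - 2) * GG N k + GG N (k + 1) + GG N (k - 1) = (real N - 3) + SG"
proof -
  define j where "j = nat (k mod int N)"
  have jk: "int j = k mod int N" unfolding j_def by (rule int_nat_mod)
  have j0: "j \<noteq> 0" using assms jk by auto
  have j1: "1 \<le> j" "j < N" using j0 mod_lt[of k] unfolding j_def by auto
  have "GG N (k + 1) = gg N (j + 1)"
  proof (cases "j + 1 < N")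
    case True
    have "(k + 1) mod int N = (k mod int N + 1) mod int N" by (simp add: mod_add_left_eq)
    also have "\<dots> = int j + 1" using True jk by (simp add: mod_pos_pos_trivial)
    finally have e: "(k + 1) mod int N = int (j + 1)" by simp
    show ?thesis unfolding GG_def e nat_int ..
  next
    case False
    then have jN: "j + 1 = N" using j1 by simp
    have "(k + 1) mod int N = (k mod int N + 1) mod int N" by (simp add: mod_add_left_eq)
    also have "\<dots> = 0" using jN jk by (metis mod_self of_nat_1 of_nat_add)
    finally show ?thesis unfolding GG_def using jN gg_0 gg_N by simp
  qed
  moreover have "GG N (k - 1) = gg N (j - 1)"
  proof -
    have "(k - 1) mod int N = (k mod int N - 1) mod int N" by (simp add: mod_diff_left_eq)
    also have "\<dots> = int j - 1" using j1 jk by (simp add: mod_pos_pos_trivial)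
    finally show ?thesis unfolding GG_def using j1 by (simp add: nat_diff_distrib)
  qed
  moreover have "GG N k = gg N j" unfolding GG_def j_def ..
  ultimately show ?thesis using gg_rec[OF j1] by simp
qed

lemma hh_nxt: assumes "x < N" shows "hh N s w (nxt N x) = GG N (s * (int x - int w) + 1)"
  unfolding hh_def
proof (rule GG_cong)
  have "int N dvd s * (int (nxt N x) - int w) - (s * (int x - int w) + 1)"
  proof (cases "x + 2 < N")
    case True
    then have eq: "s * (int (nxt N x) - int w) - (s * (int x - int w) + 1) = 2 * s - 1"
      unfolding nxt_def by (simp add: algebra_simps)
    show ?thesis unfolding eq using dvd_2s by simp
  next
    case False
    then have eq: "s * (int (nxt N x) - int w) - (s * (int x - int w) + 1) = (2 * s - 1) - int N * s"
      unfolding nxt_def by (simp add: algebra_simps of_nat_diff)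
    show ?thesis unfolding eq using dvd_2s by simp
  qed
  then show "s * (int (nxt N x) - int w) mod int N = (s * (int x - int w) + 1) mod int N"
    by (simp add: mod_eq_dvd_iff)
qed

lemma hh_prv: assumes "x < N" shows "hh N s w (prv N x) = GG N (s * (int x - int w) - 1)"
  unfolding hh_def
proof (rule GG_cong)
  have "int N dvd s * (int (prv N x) - int w) - (s * (int x - int w) - 1)"
  proof (cases "2 \<le> x")
    case True
    then have eq: "s * (int (prv N x) - int w) - (s * (int x - int w) - 1) = - (2 * s - 1)"
      unfolding prv_def by (simp add: algebra_simps of_nat_diff)
    show ?thesis unfolding eq using dvd_2s by (simp only: dvd_minus_iff dvd_diff dvd_triv_left)
  next
    case False
    then have eq: "s * (int (prv N x) - int w) - (s * (int x - int w) - 1) = int N * s - (2 * s - 1)"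
      using N5 unfolding prv_def by (simp add: algebra_simps of_nat_diff)
    show ?thesis unfolding eq using dvd_2s by (simp only: dvd_minus_iff dvd_diff dvd_triv_left)
  qed
  then show "s * (int (prv N x) - int w) mod int N = (s * (int x - int w) - 1) mod int N"
    by (simp add: mod_eq_dvd_iff)
qed

lemma hh_sum: assumes "w < N" shows "(\<Sum>y\<in>{0..<N}. hh N s w y) = SG"
proof -
  define \<phi> where "\<phi> y = nat ((s * (int y - int w)) mod int N)" for y
  have inj: "inj_on \<phi> {0..<N}"
  proof (rule inj_onI)
    fix x y assume xy: "x \<in> {0..<N}" "y \<in> {0..<N}" "\<phi> x = \<phi> y"
    then have "(s * (int x - int w)) mod int N = (s * (int y - int w)) mod int N"
      unfolding \<phi>_def by (metis int_nat_mod)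
    then have "int N dvd s * (int x - int y)"
      by (simp add: mod_eq_dvd_iff algebra_simps)
    then show "x = y" using s_cancel xy by auto
  qed
  have img: "\<phi> ` {0..<N} = {0..<N}"
  proof (rule card_subset_eq)
    show "\<phi> ` {0..<N} \<subseteq> {0..<N}" unfolding \<phi>_def using mod_lt by auto
    show "card (\<phi> ` {0..<N}) = card {0..<N}" using card_image[OF inj] by simp
  qed simp
  have "(\<Sum>y\<in>{0..<N}. hh N s w y) = (\<Sum>y\<in>{0..<N}. gg N (\<phi> y))"
    unfolding hh_def GG_def \<phi>_def ..
  also have "\<dots> = sum (gg N) (\<phi> ` {0..<N})" using sum.reindex[OF inj, of "gg N"] by simp
  also have "\<dots> = SG" unfolding img SG_def by (simp add: atLeast0LessThan)
  finally show ?thesis .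
qed

lemma lap_hh: assumes "x < N" "w < N" "x \<noteq> w"
  shows "lap {0..<N} (GN2_adj N) (hh N s w) x = real N - 3"
proof -
  define k where "k = s * (int x - int w)"
  have "k mod int N \<noteq> 0" using s_cancel[OF assms(1,2)] assms(3) unfolding k_def by auto
  from GG_rec[OF this] show ?thesis
    unfolding lap_val[OF assms(1)] hh_sum[OF assms(2)] hh_nxt[OF assms(1)] hh_prv[OF assms(1)]
    unfolding k_def hh_def by (simp add: algebra_simps)
qed

lemma hh_self: "hh N s w w = 0"
  unfolding hh_def GG_def using gg_0 by simp

lemma lap_hh_self: assumes "w < N"
  shows "lap {0..<N} (GN2_adj N) (hh N s w) w = - (real N - 1) * (real N - 3)"
proof -
  have "0 = (\<Sum>x\<in>{0..<N}. lap {0..<N} (GN2_adj N) (hh N s w) x)"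
    using lap_sum_zero[where V="{0..<N}" and a="GN2_adj N"] adj_sym by auto
  also have "\<dots> = lap {0..<N} (GN2_adj N) (hh N s w) w + (\<Sum>x\<in>{0..<N} - {w}. lap {0..<N} (GN2_adj N) (hh N s w) x)"
    using assms by (simp add: sum.remove)
  also have "(\<Sum>x\<in>{0..<N} - {w}. lap {0..<N} (GN2_adj N) (hh N s w) x) = (\<Sum>x\<in>{0..<N} - {w}. real N - 3)"
    using lap_hh assms by (intro sum.cong refl) auto
  also have "\<dots> = (real N - 1) * (real N - 3)" using assms N5 by (simp add: of_nat_diff)
  finally show ?thesis by (simp add: algebra_simps)
qed

end

context gn2 begin

abbreviation "VV \<equiv> {0..<N}"
abbreviation "AA \<equiv> GN2_adj N"

lemma harm: assumes "x < N" "w < N" "x \<noteq> w"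
  shows "hh N s w x = 1 + (\<Sum>y\<in>VV. (if AA x y then 1 / real (deg VV AA x) else 0) * hh N s w y)"
proof -
  let ?h = "hh N s w"
  have "lap VV AA ?h x = (real N - 3) * ?h x - (\<Sum>y\<in>VV. if AA x y then ?h y else 0)"
    using lap_val[OF assms(1)] nbr_sum[OF assms(1), of ?h] by simp
  then have S: "(\<Sum>y\<in>VV. if AA x y then ?h y else 0) = (real N - 3) * (?h x - 1)"
    using lap_hh[OF assms] by (simp add: algebra_simps)
  have dg: "real (deg VV AA x) = real N - 3" using deg_val[OF assms(1)] N5 by simp
  have "(\<Sum>y\<in>VV. (if AA x y then 1 / real (deg VV AA x) else 0) * ?h y) = (1 / (real N - 3)) * (\<Sum>y\<in>VV. if AA x y then ?h y else 0)"
    unfolding dg sum_distrib_left by (intro sum.cong refl) auto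
  also have "\<dots> = ?h x - 1" unfolding S using N5 by simp
  finally show ?thesis by simp
qed

lemma surv_v: "surv VV AA u v n v = 0"
  by (cases n) auto

lemma surv_nonneg: "surv VV AA u v n y \<ge> 0"
  by (induction n arbitrary: y) (auto intro!: sum_nonneg)

lemma hh_nonneg: "hh N s w x \<ge> 0"
  unfolding hh_def by (rule GG_nonneg)

lemma tail_sums:
  assumes u: "u < N" and v: "v < N"
  shows "tail_prob VV AA u v sums hh N s v u"
proof -
  let ?h = "hh N s v"
  let ?P = "\<lambda>x y. (if AA x y then 1 / real (deg VV AA x) else 0)"
  define \<Phi> where "\<Phi> n = (\<Sum>x\<in>VV. surv VV AA u v n x * ?h x)" for n
  let ?t = "tail_prob VV AA u v"
  have step: "\<Phi> (Suc n) = \<Phi> n - ?t n" for n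
  proof -
    have "\<Phi> (Suc n) = (\<Sum>y\<in>VV. (\<Sum>x\<in>VV. surv VV AA u v n x * ?P x y) * ?h y)"
      unfolding \<Phi>_def by (intro sum.cong refl) (auto simp: hh_self)
    also have "\<dots> = (\<Sum>x\<in>VV. surv VV AA u v n x * (\<Sum>y\<in>VV. ?P x y * ?h y))"
    proof -
      have "(\<Sum>y\<in>VV. (\<Sum>x\<in>VV. surv VV AA u v n x * ?P x y) * ?h y) = (\<Sum>y\<in>VV. \<Sum>x\<in>VV. surv VV AA u v n x * (?P x y * ?h y))"
        by (simp add: sum_distrib_right mult.assoc)
      also have "\<dots> = (\<Sum>x\<in>VV. \<Sum>y\<in>VV. surv VV AA u v n x * (?P x y * ?h y))"
        by (rule sum.swap)
      also have "\<dots> = (\<Sum>x\<in>VV. surv VV AA u v n x * (\<Sum>y\<in>VV. ?P x y * ?h y))"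
        by (simp add: sum_distrib_left)
      finally show ?thesis .
    qed
    also have "\<dots> = (\<Sum>x\<in>VV. surv VV AA u v n x * (?h x - 1))"
    proof (intro sum.cong refl)
      fix x assume "x \<in> VV"
      then show "surv VV AA u v n x * (\<Sum>y\<in>VV. ?P x y * ?h y) = surv VV AA u v n x * (?h x - 1)"
        using harm[of x v] v surv_v[where u=u and v=v and n=n] by (cases "x = v") auto
    qed
    also have "\<dots> = \<Phi> n - ?t n"
      unfolding \<Phi>_def tail_prob_def by (simp add: algebra_simps sum_subtractf)
    finally show ?thesis .
  qed
  have part: "(\<Sum>i<n. ?t i) = \<Phi> 0 - \<Phi> n" for n
    by (induction n) (auto simp: step)
  have P0: "\<Phi> 0 = ?h u"
  proof (cases "u = v")
    case True
    then show ?thesis unfolding \<Phi>_def by (simp add: hh_self)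
  next
    case False
    then have "\<Phi> 0 = (\<Sum>x\<in>VV. if x = u then ?h x else 0)"
      unfolding \<Phi>_def by (intro sum.cong refl) auto
    then show ?thesis using u by simp
  qed
  have tnn: "?t n \<ge> 0" for n unfolding tail_prob_def by (intro sum_nonneg surv_nonneg)
  have Pnn: "\<Phi> n \<ge> 0" for n unfolding \<Phi>_def by (intro sum_nonneg mult_nonneg_nonneg surv_nonneg hh_nonneg)
  have "summable ?t"
    by (rule summableI_nonneg_bounded[where x="?h u"]) (use tnn part P0 Pnn in auto)
  then have t0: "?t \<longlonglongrightarrow> 0" by (rule summable_LIMSEQ_zero)
  define M where "M = (\<Sum>x\<in>VV. ?h x)"
  have hM: "x \<in> VV \<Longrightarrow> ?h x \<le> M" for x
    unfolding M_def by (rule member_le_sum) (auto intro: hh_nonneg)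
  have PM: "\<Phi> n \<le> M * ?t n" for n
  proof -
    have "\<Phi> n \<le> (\<Sum>x\<in>VV. surv VV AA u v n x * M)"
      unfolding \<Phi>_def by (intro sum_mono mult_left_mono hM surv_nonneg) auto
    also have "\<dots> = M * ?t n" unfolding tail_prob_def by (simp add: sum_distrib_left mult.commute)
    finally show ?thesis .
  qed
  have Mt: "(\<lambda>n. M * ?t n) \<longlonglongrightarrow> 0" by (rule tendsto_mult_right_zero[OF t0])
  have e1: "eventually (\<lambda>n. (\<lambda>n. 0::real) n \<le> \<Phi> n) sequentially" using Pnn by simp
  have e2: "eventually (\<lambda>n. \<Phi> n \<le> M * ?t n) sequentially" using PM by simp
  have "\<Phi> \<longlonglongrightarrow> 0"
    by (rule tendsto_sandwich[OF e1 e2 tendsto_const Mt])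
  then have "(\<lambda>n. ?h u - \<Phi> n) \<longlonglongrightarrow> ?h u - 0" by (intro tendsto_diff tendsto_const)
  then have "(\<lambda>n. \<Sum>i<n. ?t i) \<longlonglongrightarrow> ?h u" unfolding part P0 by simp
  then show ?thesis unfolding sums_def .
qed

end

context gn2 begin

lemma GG_pos: assumes "k mod int N \<noteq> 0" shows "GG N k > 0"
proof -
  have "0 < nat (k mod int N)" using assms int_nat_mod[of k] by (metis gr0I of_nat_0)
  then show ?thesis unfolding GG_def using gg_pos mod_lt by auto
qed

lemma eff_res_val: assumes u: "u < N" and v: "v < N" and uv: "u \<noteq> v"
  shows "eff_res VV AA u v = 2 * hh N s v u / (real N * (real N - 3))"
proof -
  define H where "H = hh N s v u"
  have Hpos: "H > 0" unfolding H_def hh_def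
    by (rule GG_pos) (use s_cancel[OF u v] uv in auto)
  have Hu: "hh N s u v = H" unfolding H_def hh_def
    using GG_neg[of "s * (int u - int v)"] by (simp add: algebra_simps)
  define \<phi>0 where "\<phi>0 x = (hh N s v x - hh N s u x + H) / (2 * H)" for x
  have p0u: "\<phi>0 u = 1" unfolding \<phi>0_def using Hpos by (simp add: hh_self H_def)
  have p0v: "\<phi>0 v = 0" unfolding \<phi>0_def using Hpos by (simp add: hh_self Hu)
  have lapp: "lap VV AA \<phi>0 x = (lap VV AA (hh N s v) x - lap VV AA (hh N s u) x) / (2 * H)" for x
    unfolding \<phi>0_def by (rule lap_lin)
  have lap_other: "x \<in> VV \<Longrightarrow> x \<noteq> u \<Longrightarrow> x \<noteq> v \<Longrightarrow> lap VV AA \<phi>0 x = 0" for x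
    unfolding lapp using lap_hh u v by auto
  define c where "c = real N * (real N - 3) / (2 * H)"
  have lap_u: "lap VV AA \<phi>0 u = c"
    unfolding lapp c_def lap_hh[OF u v uv] lap_hh_self[OF u] by (simp add: algebra_simps)
  have sym: "\<And>x y. AA x y = AA y x" by (rule adj_sym)
  have E0: "energy VV AA \<phi>0 = c"
  proof -
    have "energy VV AA \<phi>0 = (\<Sum>x\<in>VV. \<phi>0 x * lap VV AA \<phi>0 x)"
      by (rule energy_lap) (auto simp: adj_sym)
    also have "\<dots> = (\<Sum>x\<in>VV. if x = u then c else 0)"
    proof (intro sum.cong refl)
      fix x assume "x \<in> VV"
      then show "\<phi>0 x * lap VV AA \<phi>0 x = (if x = u then c else 0)"
        using p0u p0v lap_u lap_other[of x] by (cases "x = v") auto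
    qed
    also have "\<dots> = c" using u by simp
    finally show ?thesis .
  qed
  have lower: "c \<le> energy VV AA \<phi>" if "\<phi> u = 1" "\<phi> v = 0" for \<phi>
  proof -
    define \<eta> where "\<eta> x = \<phi> x - \<phi>0 x" for x
    have "\<phi> = (\<lambda>x. \<phi>0 x + \<eta> x)" unfolding \<eta>_def by simp
    then have "energy VV AA \<phi> = energy VV AA \<phi>0 + energy VV AA \<eta> + 2 * (\<Sum>x\<in>VV. \<eta> x * lap VV AA \<phi>0 x)"
      using energy_add[where V=VV and a=AA and f=\<phi>0 and g=\<eta>] adj_sym by simp
    moreover have "(\<Sum>x\<in>VV. \<eta> x * lap VV AA \<phi>0 x) = 0"
    proof (rule sum.neutral, rule ballI)
      fix x assume "x \<in> VV"
      then show "\<eta> x * lap VV AA \<phi>0 x = 0"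
        using that p0u p0v lap_other[of x] unfolding \<eta>_def by (cases "x = u"; cases "x = v") auto
    qed
    ultimately show ?thesis using E0 energy_nonneg[of VV AA \<eta>] by simp
  qed
  have "Inf {energy VV AA \<phi> | \<phi>. \<phi> u = 1 \<and> \<phi> v = 0} = c"
  proof (rule cInf_eq_minimum)
    show "c \<in> {energy VV AA \<phi> | \<phi>. \<phi> u = 1 \<and> \<phi> v = 0}" using E0 p0u p0v by auto
  next
    fix x assume "x \<in> {energy VV AA \<phi> | \<phi>. \<phi> u = 1 \<and> \<phi> v = 0}"
    then show "c \<le> x" using lower by auto
  qed
  then show ?thesis unfolding eff_res_def c_def H_def using uv by simp
qed

lemma edges_card: "card (edges VV AA) = N * (N - 3) div 2"
proof -
  define P where "P = {(x, y). x \<in> VV \<and> y \<in> VV \<and> x < y \<and> AA x y}"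
  define Q where "Q = (SIGMA x:VV. {y \<in> VV. AA x y})"
  have finP: "finite P" unfolding P_def by (rule finite_subset[of _ "VV \<times> VV"]) auto
  have Q: "Q = P \<union> prod.swap ` P"
    unfolding Q_def P_def using adj_sym by (auto simp: GN2_adj_def image_iff)
  have disj: "P \<inter> prod.swap ` P = {}" unfolding P_def by auto
  have "card Q = card P + card (prod.swap ` P)"
    unfolding Q using finP disj by (simp add: card_Un_disjoint)
  also have "card (prod.swap ` P) = card P" by (rule card_image) (auto simp: inj_on_def)
  finally have cQ: "card Q = 2 * card P" by simp
  have "card Q = (\<Sum>x\<in>VV. deg VV AA x)" unfolding Q_def deg_def by simp
  also have "\<dots> = (\<Sum>x\<in>VV. N - 3)" using deg_val by (intro sum.cong refl) auto
  also have "\<dots> = N * (N - 3)" by simp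
  finally have cP: "2 * card P = N * (N - 3)" using cQ by simp
  have E: "edges VV AA = (\<lambda>(x, y). {x, y}) ` P"
  proof
    show "edges VV AA \<subseteq> (\<lambda>(x, y). {x, y}) ` P"
    proof
      fix e assume "e \<in> edges VV AA"
      then obtain x y where e: "e = {x, y}" "x \<in> VV" "y \<in> VV" "AA x y" unfolding edges_def by auto
      then have "x \<noteq> y" unfolding GN2_adj_def by auto
      then show "e \<in> (\<lambda>(x, y). {x, y}) ` P"
      proof (cases "x < y")
        case True
        then have "(x, y) \<in> P" using e unfolding P_def by auto
        then show ?thesis using e by (auto intro!: image_eqI[of _ _ "(x, y)"])
      next
        case False
        with \<open>x \<noteq> y\<close> have "y < x" by simp
        moreover have "AA y x" using e adj_sym by auto
        ultimately have "(y, x) \<in> P" using e unfolding P_def by auto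
        then show ?thesis using e by (auto simp: insert_commute intro!: image_eqI[of _ _ "(y, x)"])
      qed
    qed
    show "(\<lambda>(x, y). {x, y}) ` P \<subseteq> edges VV AA" unfolding P_def edges_def by auto
  qed
  have inj: "inj_on (\<lambda>(x, y). {x, y}) P"
  proof (rule inj_onI)
    fix p q assume "p \<in> P" "q \<in> P" "(\<lambda>(x, y). {x::nat, y}) p = (\<lambda>(x, y). {x, y}) q"
    then show "p = q" unfolding P_def by (auto simp: doubleton_eq_iff)
  qed
  have "card (edges VV AA) = card P" unfolding E by (rule card_image[OF inj])
  then show ?thesis using cP by simp
qed

end

context gn2 begin

lemma hh_formula: assumes "u < N" "v < N"
  defines "q \<equiv> (int v - int u) mod int N"
  defines "d \<equiv> min ((s * q) mod int N) (int N - (s * q) mod int N)"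
  shows "hh N s v u = gg N (nat d)"
proof -
  define r where "r = (s * q) mod int N"
  have "hh N s v u = GG N (- (s * (int u - int v)))" unfolding hh_def by (rule GG_neg[symmetric])
  also have "\<dots> = GG N (s * q)"
    by (rule GG_cong) (simp add: q_def mod_mult_right_eq algebra_simps)
  also have "\<dots> = gg N (nat r)" unfolding GG_def r_def ..
  also have "\<dots> = gg N (nat d)"
  proof (cases "r \<le> int N - r")
    case True
    then show ?thesis unfolding d_def r_def[symmetric] by simp
  next
    case False
    then have dd: "d = int N - r" unfolding d_def r_def[symmetric] by simp
    have r0: "0 \<le> r" "r < int N" unfolding r_def using N5 by simp_all
    then have "nat d = N - nat r" unfolding dd by linarith
    moreover have "nat r \<le> N" using r0 by linarith
    ultimately show ?thesis using gg_sym by simp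
  qed
  finally show ?thesis .
qed

end

theorem corollary4p4:
  fixes N u v :: nat and s :: int
  assumes "odd N" and "N \<ge> 5" and "u < N" and "v < N"
    and "(2 * s) mod int N = 1"
  shows "(\<forall>x<N. deg {0..<N} (GN2_adj N) x = N - 3)
    \<and> card (edges {0..<N} (GN2_adj N)) = N * (N - 3) div 2
    \<and> hitting_time {0..<N} (GN2_adj N) u v
        = real N * (real N - 3) / 2 * eff_res {0..<N} (GN2_adj N) u v
    \<and> (let \<Delta> = sqrt (real N * (real N - 4));
           \<rho> = (real N - 2 + \<Delta>) / 2;
           q = (int v - int u) mod int N;
           d = min ((s * q) mod int N) (int N - (s * q) mod int N)
       in tail_prob {0..<N} (GN2_adj N) u v sums
            (real N * (real N - 3) / (\<Delta> * (\<rho> ^ N + 1)) *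
             (\<rho> ^ N - 1 + (-1) ^ nat d * (\<rho> ^ nat d - \<rho> ^ (N - nat d)))))"
proof -
  interpret gn2 N s using assms by unfold_locales auto
  have S: "tail_prob {0..<N} (GN2_adj N) u v sums hh N s v u" by (rule tail_sums) (use assms in auto)
  have HT: "hitting_time {0..<N} (GN2_adj N) u v = hh N s v u"
    unfolding hitting_time_def using S by (rule sums_unique[symmetric])
  have C3: "hitting_time {0..<N} (GN2_adj N) u v
        = real N * (real N - 3) / 2 * eff_res {0..<N} (GN2_adj N) u v"
  proof (cases "u = v")
    case True
    then show ?thesis unfolding HT eff_res_def by (simp add: hh_self)
  next
    case False
    have "real N * (real N - 3) \<noteq> 0" using assms by simp
    then show ?thesis unfolding HT eff_res_val[OF assms(3,4) False] by simp
  qed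
  have C4: "let \<Delta> = sqrt (real N * (real N - 4));
           \<rho> = (real N - 2 + \<Delta>) / 2;
           q = (int v - int u) mod int N;
           d = min ((s * q) mod int N) (int N - (s * q) mod int N)
       in tail_prob {0..<N} (GN2_adj N) u v sums
            (real N * (real N - 3) / (\<Delta> * (\<rho> ^ N + 1)) *
             (\<rho> ^ N - 1 + (-1) ^ nat d * (\<rho> ^ nat d - \<rho> ^ (N - nat d))))"
    using S unfolding hh_formula[OF assms(3,4)] Let_def gg_def Cc_def rho_def Dl_def .
  show ?thesis using deg_val edges_card C3 C4 by auto
qed

end
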